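(* Let $w_{\mathrm{asym}}=(\mu+w_{\mathrm{pre}})/\|\mu+w_{\mathrm{pre}}\|_2$, so that the 1-nearest-neighbour classifier whose memory for class $0$ consists only of copies of $m_0^*=-\mu-w_{\mathrm{pre}}$ and for class $1$ only of copies of $m_1^*=\mu+w_{\mathrm{pre}}$ is the linear classifier $h_{\mathrm{asym}}(f)=\mathbf 1\{f^\top w_{\mathrm{asym}}>0\}$ (weight $w_{\mathrm{asym}}$, bias $0$). Then $\mu^\top w_{\mathrm{asym}}\ge\mu^\top w_{\mathrm{pre}}$, and the error rate satisfies $\epsilon_{\mathrm{asym}}:=\epsilon(h_{\mathrm{asym}})\le\epsilon_{\mathrm{pre}}$.
   Context: Fix $d\ge1$, $\mu\in\mathbb{R}^d$, $w_{\mathrm{pre}}\in\mathbb{R}^d$ with $\|w_{\mathrm{pre}}\|_2=1$, $b_{\mathrm{pre}}\in\mathbb{R}$. Data: label $y$ uniform on $\{0,1\}$; given $y$, embedding $f$ uniform on the closed unit ball centered at $(2y-1)\mu$. For a classifier $h$, $\epsilon(h)=\Pr(h(f)\ne y)$. The initial classifier is $\hat y(f)=\mathbf 1\{f^\top w_{\mathrm{pre}}+b_{\mathrm{pre}}>0\}$ with error rate $\epsilon_{\mathrm{pre}}$, assumed to satisfy $\epsilon_{\mathrm{pre}}<1/2$, equivalently $\mu^\top w_{\mathrm{pre}}>0$ and $-\mu^\top w_{\mathrm{pre}}-1<b_{\mathrm{pre}}<\mu^\top w_{\mathrm{pre}}+1$. *)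

theory Defs
  imports "HOL-Analysis.Analysis"
begin

definition lin_clf :: "'a::euclidean_space \<Rightarrow> real \<Rightarrow> 'a \<Rightarrow> bool" where
  "lin_clf w b f \<longleftrightarrow> f \<bullet> w + b > 0"

definition unif_ball :: "'a::euclidean_space \<Rightarrow> 'a measure" where
  "unif_ball c = uniform_measure lborel (cball c 1)"

text \<open>Error rate Pr(h(f) \<noteq> y), where y is uniform on {0,1} (True = label 1)
  and given y, f is uniform on the closed unit ball centred at (2y-1) mu.\<close>
definition err_rate :: "'a::euclidean_space \<Rightarrow> ('a \<Rightarrow> bool) \<Rightarrow> real" where
  "err_rate mu h =
     (1/2) * measure (unif_ball (- mu)) {f. h f}
   + (1/2) * measure (unif_ball mu) {f. \<not> h f}"

end

theory Submission
  imports Defs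
begin

typedef (overloaded) ('a::euclidean_space) bidx = "{..<DIM('a)}"
  by (rule exI[of _ 0]) (simp add: DIM_positive)

instance bidx :: (euclidean_space) finite
proof
  have "(UNIV :: 'a bidx set) = Abs_bidx ` {..<DIM('a)}"
    using type_definition.univ[OF type_definition_bidx] .
  then show "finite (UNIV :: 'a bidx set)" by (metis finite_imageI finite_lessThan)
qed

instantiation bidx :: (euclidean_space) linorder
begin
definition less_eq_bidx :: "'a bidx \<Rightarrow> 'a bidx \<Rightarrow> bool" where "less_eq_bidx x y \<longleftrightarrow> Rep_bidx x \<le> Rep_bidx y"
definition less_bidx :: "'a bidx \<Rightarrow> 'a bidx \<Rightarrow> bool" where "less_bidx x y \<longleftrightarrow> Rep_bidx x < Rep_bidx y"
instance by standard (auto simp: less_eq_bidx_def less_bidx_def Rep_bidx_inject)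
end

instance bidx :: (euclidean_space) wellorder
proof
  fix P :: "'a bidx \<Rightarrow> bool" and a
  assume H: "\<And>x. (\<And>y. y < x \<Longrightarrow> P y) \<Longrightarrow> P x"
  have "\<forall>x. Rep_bidx x = n \<longrightarrow> P x" for n
    by (induction n rule: less_induct) (metis H less_bidx_def)
  then show "P a" by blast
qed

lemma "CARD('a::euclidean_space bidx) = DIM('a)"
  by (simp add: type_definition.card[OF type_definition_bidx])

definition bmap :: "'a::euclidean_space bidx \<Rightarrow> 'a" where
  "bmap i = (SOME h. bij_betw h {0..<DIM('a)} (Basis::'a set)) (Rep_bidx i)"

lemma bmap_bij: "bij_betw (bmap :: 'a::euclidean_space bidx \<Rightarrow> 'a) UNIV Basis"
proof -
  let ?h = "SOME h. bij_betw h {0..<DIM('a)} (Basis::'a set)"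
  have h: "bij_betw ?h {0..<DIM('a)} (Basis::'a set)"
    by (metis ex_bij_betw_nat_finite finite_Basis someI_ex)
  have r: "bij_betw (Rep_bidx :: 'a bidx \<Rightarrow> nat) UNIV {0..<DIM('a)}"
    using type_definition_bidx[where 'a='a] by (simp add: bij_betw_def inj_on_def Rep_bidx_inject type_definition.Rep_range atLeast0LessThan)
  have "bij_betw (?h \<circ> Rep_bidx :: 'a bidx \<Rightarrow> 'a) UNIV Basis"
    by (rule bij_betw_trans[OF r h])
  then show ?thesis unfolding bmap_def[abs_def] by (simp add: comp_def)
qed

definition Tc :: "'a::euclidean_space \<Rightarrow> real^('a bidx)" where
  "Tc x = (\<chi> i. x \<bullet> bmap i)"

definition Ti :: "real^('a bidx) \<Rightarrow> 'a::euclidean_space" where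
  "Ti y = (\<Sum>i\<in>UNIV. (y $ i) *\<^sub>R bmap i)"

lemma sum_bmap: "(\<Sum>i\<in>UNIV. f (bmap i)) = (\<Sum>b\<in>(Basis::'a::euclidean_space set). f b)"
  using sum.reindex_bij_betw[OF bmap_bij[where 'a='a], of f] by simp

lemma prod_bmap: "(\<Prod>i\<in>UNIV. f (bmap i)) = (\<Prod>b\<in>(Basis::'a::euclidean_space set). f b)"
  using prod.reindex_bij_betw[OF bmap_bij[where 'a='a], of f] by simp

lemma bmap_inner: "bmap i \<bullet> bmap j = (if i = j then 1 else 0)"
proof -
  have "bmap i \<in> Basis" "bmap j \<in> Basis" using bmap_bij[where 'a='a] by (auto simp: bij_betw_def)
  moreover have "bmap i = bmap j \<longleftrightarrow> i = j" using bmap_bij[where 'a='a] by (auto simp: bij_betw_def inj_on_def)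
  ultimately show ?thesis by (auto simp: inner_Basis)
qed

lemma Tc_inner: "Tc x \<bullet> Tc y = x \<bullet> y"
  unfolding Tc_def inner_vec_def using sum_bmap[of "\<lambda>b. (x \<bullet> b) * (y \<bullet> b)"] by (simp add: euclidean_inner[of x y])

lemma Tc_Ti: "Tc (Ti y) = y"
proof -
  have "Ti y \<bullet> bmap j = y $ j" for j
    unfolding Ti_def by (simp add: inner_sum_left bmap_inner if_distrib sum.delta cong: if_cong)
  then show ?thesis unfolding Tc_def by (simp add: vec_eq_iff)
qed

lemma Ti_Tc: "Ti (Tc x) = x"
  unfolding Ti_def Tc_def using sum_bmap[of "\<lambda>b. (x \<bullet> b) *\<^sub>R b"] by (simp add: euclidean_representation)

lemma Tc_linear: "linear Tc"
  by (rule linearI) (simp_all add: Tc_def vec_eq_iff inner_add_left)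

lemma Ti_linear: "linear Ti"
  by (rule linearI) (simp_all add: Ti_def scaleR_add_left sum.distrib scaleR_sum_right)

lemma Tc_meas: "Tc \<in> borel_measurable borel"
  by (intro borel_measurable_continuous_onI linear_continuous_on linear_conv_bounded_linear[THEN iffD1] Tc_linear)

lemma Ti_meas: "Ti \<in> borel_measurable borel"
  by (intro borel_measurable_continuous_onI linear_continuous_on linear_conv_bounded_linear[THEN iffD1] Ti_linear)

lemma distr_Tc: "distr lborel borel (Tc :: 'a::euclidean_space \<Rightarrow> _) = lborel"
proof (rule lborel_eqI[symmetric])
  fix l u :: "real^('a bidx)"
  assume le: "\<And>b. b \<in> Basis \<Longrightarrow> l \<bullet> b \<le> u \<bullet> b"
  have le': "l $ i \<le> u $ i" for i using le[of "axis i 1"] by (auto simp: Basis_vec_def cart_eq_inner_axis)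
  have Tib: "Ti y \<bullet> bmap j = y $ j" for y j
    by (metis Tc_Ti Tc_def vec_lambda_beta)
  have pre: "Tc -` box l u \<inter> space lborel = box (Ti l) (Ti u)"
  proof -
    have "x \<in> box (Ti l) (Ti u) \<longleftrightarrow> (\<forall>i. l $ i < x \<bullet> bmap i \<and> x \<bullet> bmap i < u $ i)" for x
    proof -
      have "x \<in> box (Ti l) (Ti u) \<longleftrightarrow> (\<forall>b\<in>Basis. Ti l \<bullet> b < x \<bullet> b \<and> x \<bullet> b < Ti u \<bullet> b)"
        by (simp add: mem_box)
      also have "\<dots> \<longleftrightarrow> (\<forall>i. Ti l \<bullet> bmap i < x \<bullet> bmap i \<and> x \<bullet> bmap i < Ti u \<bullet> bmap i)"
        using bmap_bij[where 'a='a] unfolding bij_betw_def by auto (metis rangeE)+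
      finally show ?thesis by (simp add: Tib)
    qed
    then show ?thesis by (auto simp: mem_box_cart Tc_def)
  qed
  have "emeasure (distr lborel borel Tc) (box l u) = emeasure lborel (Tc -` box l u \<inter> space lborel)"
    by (rule emeasure_distr) (use Tc_meas in auto)
  also have "\<dots> = emeasure lborel (box (Ti l) (Ti u))" by (simp only: pre)
  also have "\<dots> = (\<Prod>b\<in>Basis. (Ti u - Ti l) \<bullet> b)"
  proof (rule emeasure_lborel_box)
    fix b :: 'a assume "b \<in> Basis"
    then obtain i where "b = bmap i" using bmap_bij[where 'a='a] unfolding bij_betw_def by auto
    then show "Ti l \<bullet> b \<le> Ti u \<bullet> b" using le' by (simp add: Tib)
  qed
  also have "\<dots> = (\<Prod>i\<in>UNIV. u $ i - l $ i)"
    using prod_bmap[of "\<lambda>b. (Ti u - Ti l) \<bullet> b"] by (simp add: inner_diff_left Tib)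
  also have "\<dots> = (\<Prod>b\<in>Basis. (u - l) \<bullet> b)"
    by (simp add: Basis_vec_def cart_eq_inner_axis axis_eq_axis prod.UNION_disjoint inner_diff_left)
  finally show "emeasure (distr lborel borel Tc) (box l u) = (\<Prod>b\<in>Basis. (u - l) \<bullet> b)"
    by simp
qed simp


lemma lm_sub:
  fixes S :: "'a::euclidean_space set"
  assumes "S \<in> sets borel" "S \<subseteq> cball 0 1"
  shows "S \<in> lmeasurable"
  by (rule fmeasurableI2[OF lmeasurable_cball assms(2)]) (use assms(1) in auto)

definition PG :: "'a::euclidean_space \<Rightarrow> real \<Rightarrow> real" where
  "PG w t = measure lebesgue (cball 0 1 \<inter> {x. t < x \<bullet> w})"

lemma PG_ge:
  fixes w :: "'a::euclidean_space"
  assumes "norm w = 1"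
  shows "measure lebesgue (cball 0 1 \<inter> {x. t \<le> x \<bullet> w}) = PG w t"
proof -
  have w0: "w \<noteq> 0" using assms by auto
  have "cball 0 1 \<inter> {x. t \<le> x \<bullet> w} = (cball 0 1 \<inter> {x. t < x \<bullet> w}) \<union> (cball 0 1 \<inter> {x. w \<bullet> x = t})"
    by (auto simp: inner_commute)
  moreover have "cball 0 1 \<inter> {x. w \<bullet> x = t} \<in> null_sets lebesgue"
    using negligible_hyperplane[of w t] w0 negligible_subset
    by (metis inf_le2 negligible_iff_null_sets)
  moreover have "cball 0 1 \<inter> {x. t < x \<bullet> w} \<in> sets lebesgue"
    using lm_sub[of "cball 0 1 \<inter> {x. t < x \<bullet> w}"] by (auto intro: fmeasurableD)
  ultimately show ?thesis unfolding PG_def by (simp add: measure_Un_null_set)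
qed

lemma PG_mono:
  fixes w :: "'a::euclidean_space"
  assumes "s \<le> t"
  shows "PG w t \<le> PG w s"
  unfolding PG_def
proof (rule measure_mono_fmeasurable)
  show "cball 0 1 \<inter> {x. s < x \<bullet> w} \<in> lmeasurable" by (rule lm_sub) auto
qed (use assms in auto)

lemma norm_le1: "norm (x::'a::real_inner) \<le> 1 \<longleftrightarrow> x \<bullet> x \<le> 1"
  by (simp add: norm_eq_sqrt_inner)

lemma PG_key:
  fixes w :: "'a::euclidean_space"
  assumes w: "norm w = 1" and a: "a \<ge> 0" and c: "c \<ge> 0"
  shows "2 * PG w a \<le> PG w (a - c) + PG w (a + c)"
proof -
  define B where "B = (cball 0 1 :: 'a set)"
  define S1 where "S1 = B \<inter> {x. a - c \<le> x \<bullet> w \<and> x \<bullet> w < a}"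
  define S2 where "S2 = B \<inter> {x. a < x \<bullet> w \<and> x \<bullet> w \<le> a + c}"
  have ww: "w \<bullet> w = 1" using w by (simp add: norm_eq_sqrt_inner)
  have mS1: "S1 \<in> lmeasurable" unfolding S1_def B_def by (rule lm_sub) auto
  have mS2: "S2 \<in> lmeasurable" unfolding S2_def B_def by (rule lm_sub) auto
  have mGt: "\<And>t. B \<inter> {x. t < x \<bullet> w} \<in> lmeasurable" unfolding B_def by (rule lm_sub) auto
  have mGe: "\<And>t. B \<inter> {x. t \<le> x \<bullet> w} \<in> lmeasurable" unfolding B_def by (rule lm_sub) auto
  have e1: "measure lebesgue (B \<inter> {x. a - c \<le> x \<bullet> w}) = measure lebesgue (B \<inter> {x. a \<le> x \<bullet> w}) + measure lebesgue S1"
  proof -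
    have "B \<inter> {x. a - c \<le> x \<bullet> w} = (B \<inter> {x. a \<le> x \<bullet> w}) \<union> S1" unfolding S1_def using c by auto
    moreover have "(B \<inter> {x. a \<le> x \<bullet> w}) \<inter> S1 = {}" unfolding S1_def by auto
    ultimately show ?thesis
      using measure_Un3[OF mGe[of a] mS1]
      by simp
  qed
  have e2: "PG w a = PG w (a + c) + measure lebesgue S2"
  proof -
    have "B \<inter> {x. a < x \<bullet> w} = (B \<inter> {x. a + c < x \<bullet> w}) \<union> S2" unfolding S2_def using c by auto
    moreover have "(B \<inter> {x. a + c < x \<bullet> w}) \<inter> S2 = {}" unfolding S2_def by auto
    ultimately show ?thesis using measure_Un3[OF mGt[of "a+c"] mS2] unfolding PG_def B_def[symmetric]
      by simp
  qed
  define R where "R = (\<lambda>x::'a. (-1) *\<^sub>R x + (2*a) *\<^sub>R w)"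
  have mR: "measure lebesgue (R ` S2) = measure lebesgue S2"
    unfolding R_def using measure_lebesgue_affine[of "-1" "(2*a) *\<^sub>R w" S2] by simp
  have sub: "R ` S2 \<subseteq> S1"
  proof
    fix y assume "y \<in> R ` S2"
    then obtain x where x: "x \<in> S2" and y: "y = R x" by auto
    have xx: "x \<bullet> x \<le> 1" using x unfolding S2_def B_def by (simp add: norm_le1)
    have yw: "y \<bullet> w = 2*a - x \<bullet> w" unfolding y R_def by (simp add: inner_add_left inner_diff_left ww)
    have "y \<bullet> y = x \<bullet> x - 4*a*(x \<bullet> w) + 4*a*a"
      unfolding y R_def by (simp add: inner_add_left inner_add_right ww inner_commute algebra_simps)
    also have "\<dots> \<le> x \<bullet> x" using x a unfolding S2_def
      by (simp add: mult_left_mono)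
    finally have "y \<bullet> y \<le> 1" using xx by simp
    then show "y \<in> S1" unfolding S1_def B_def using yw x unfolding S2_def by (auto simp: norm_le1)
  qed
  have RR: "R (R x) = x" for x unfolding R_def by simp
  have img: "R ` S2 = R -` S2 \<inter> space borel"
    using RR by (auto simp: image_iff) (metis RR)
  have Rm: "R \<in> borel_measurable borel" unfolding R_def by measurable
  have "S2 \<in> sets borel" unfolding S2_def B_def by measurable
  then have "R ` S2 \<in> sets borel" unfolding img by (rule measurable_sets[OF Rm])
  then have "R ` S2 \<in> sets lebesgue" by simp
  then have "measure lebesgue S2 \<le> measure lebesgue S1"
    using mR sub mS1 measure_mono_fmeasurable[of "R ` S2" S1 lebesgue]
    by simp
  moreover have "PG w (a - c) = PG w a + measure lebesgue S1"
    using e1 PG_ge[OF w] unfolding B_def by simp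
  ultimately show ?thesis using e2 by simp
qed

lemma V_pos: "measure lebesgue (cball (0::'a::euclidean_space) 1) > 0"
  using content_cball_pos[of 1 "0::'a"] by simp

lemma cball_trans: "cball (c::'a::euclidean_space) 1 = (\<lambda>x. x - (-c)) ` cball 0 1"
proof -
  have "y \<in> (\<lambda>x. x - (-c)) ` cball 0 1" if "y \<in> cball c 1" for y
    using that by (intro image_eqI[of _ _ "y - c"]) (auto simp: dist_norm norm_minus_commute)
  then show ?thesis by (auto simp: dist_norm)
qed

lemma unif_meas:
  fixes c :: "'a::euclidean_space"
  assumes X: "X \<in> sets borel"
  shows "measure (unif_ball c) X = measure lebesgue (cball c 1 \<inter> X) / measure lebesgue (cball (0::'a) 1)"
proof -
  have Vc: "measure lebesgue (cball c 1) = measure lebesgue (cball (0::'a) 1)"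
    by (subst cball_trans) (rule measure_translation_subtract)
  have cb: "cball c 1 \<in> sets borel" by simp
  have fin: "emeasure lborel (cball c 1) = ennreal (measure lebesgue (cball c 1))"
    using emeasure_eq_measure2[OF lmeasurable_cball[of c 1]] by simp
  have ne0: "emeasure lborel (cball c 1) \<noteq> 0" using fin Vc V_pos[where 'a='a] by simp
  have neinf: "emeasure lborel (cball c 1) \<noteq> \<infinity>" using fin by simp
  show ?thesis unfolding unif_ball_def
    using measure_uniform_measure[OF ne0 neinf, of X] X Vc by simp
qed

lemma err_formula:
  fixes mu w :: "'a::euclidean_space"
  assumes w: "norm w = 1"
  shows "err_rate mu (lin_clf w b) = (PG w (mu \<bullet> w - b) + PG w (mu \<bullet> w + b)) / (2 * measure lebesgue (cball (0::'a) 1))"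
proof -
  let ?V = "measure lebesgue (cball (0::'a) 1)"
  have nn: "norm (- f - mu) = norm (- mu - f)" for f :: 'a by (metis add.commute diff_conv_add_uminus)
  have s1: "cball (-mu) 1 \<inter> {f. lin_clf w b f} = (\<lambda>x. x - mu) ` (cball 0 1 \<inter> {x. mu \<bullet> w - b < x \<bullet> w})"
  proof -
    have "f \<in> (\<lambda>x. x - mu) ` (cball 0 1 \<inter> {x. mu \<bullet> w - b < x \<bullet> w})" if "f \<in> cball (-mu) 1 \<inter> {f. lin_clf w b f}" for f
      using that nn[of f] by (intro image_eqI[of _ _ "f + mu"]) (auto simp: dist_norm lin_clf_def inner_add_left)
    then show ?thesis by (auto simp: dist_norm lin_clf_def inner_diff_left)
  qed
  have s2: "cball mu 1 \<inter> {f. \<not> lin_clf w b f} = (\<lambda>x. (-1) *\<^sub>R x + mu) ` (cball 0 1 \<inter> {x. mu \<bullet> w + b \<le> x \<bullet> w})"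
  proof -
    have "f \<in> (\<lambda>x. (-1) *\<^sub>R x + mu) ` (cball 0 1 \<inter> {x. mu \<bullet> w + b \<le> x \<bullet> w})" if "f \<in> cball mu 1 \<inter> {f. \<not> lin_clf w b f}" for f
      using that by (intro image_eqI[of _ _ "mu - f"]) (auto simp: norm_minus_commute dist_norm lin_clf_def inner_diff_left)
    then show ?thesis by (auto simp: norm_minus_commute dist_norm lin_clf_def inner_diff_left inner_add_left)
  qed
  have b1: "{f. lin_clf w b f} \<in> sets borel" unfolding lin_clf_def by measurable
  have b2: "{f. \<not> lin_clf w b f} \<in> sets borel" unfolding lin_clf_def by measurable
  have m1: "measure (unif_ball (-mu)) {f. lin_clf w b f} = PG w (mu \<bullet> w - b) / ?V"
    unfolding unif_meas[OF b1] s1 measure_translation_subtract PG_def ..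
  have m2: "measure (unif_ball mu) {f. \<not> lin_clf w b f} = PG w (mu \<bullet> w + b) / ?V"
    unfolding unif_meas[OF b2] s2 measure_lebesgue_affine PG_ge[OF w] by simp
  show ?thesis unfolding err_rate_def m1 m2 by (simp add: field_simps)
qed


lemma Tc_measure:
  fixes S :: "'a::euclidean_space set"
  assumes S: "S \<in> sets borel"
  shows "measure lebesgue (Tc ` S) = measure lebesgue S"
proof -
  have img: "Tc ` S = Ti -` S \<inter> space borel"
    by (auto simp: image_iff Ti_Tc) (metis Tc_Ti)
  have TS: "Tc ` S \<in> sets borel" unfolding img by (rule measurable_sets[OF Ti_meas S])
  have inj: "Tc -` (Tc ` S) \<inter> space lborel = S"
    by (auto simp: image_iff) (metis Ti_Tc)
  have inj2: "Tc -` (Tc ` S) = S"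
    using inj by simp
  have "measure lebesgue (Tc ` S) = measure lborel (Tc ` S)" using TS by simp
  also have "\<dots> = measure (distr lborel borel (Tc :: 'a \<Rightarrow> _)) (Tc ` S)" by (simp add: distr_Tc)
  also have "\<dots> = measure lborel (Tc -` (Tc ` S) \<inter> space lborel)"
    by (rule measure_distr) (use Tc_meas TS in auto)
  also have "\<dots> = measure lebesgue S" using S by (simp add: inj inj2)
  finally show ?thesis .
qed

lemma cap_image:
  fixes F :: "'a::real_inner \<Rightarrow> 'b::real_inner"
  assumes ip: "\<And>x y. F x \<bullet> F y = x \<bullet> y" and su: "surj F"
  shows "F ` (cball 0 1 \<inter> {x. t < x \<bullet> w}) = cball 0 1 \<inter> {y. t < y \<bullet> F w}"
proof -
  have nF: "norm (F x) = norm x" for x by (simp add: norm_eq_sqrt_inner ip)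
  have "y \<in> F ` (cball 0 1 \<inter> {x. t < x \<bullet> w})" if "y \<in> cball 0 1 \<inter> {y. t < y \<bullet> F w}" for y
  proof -
    obtain x where "y = F x" using su by (metis surjD)
    then show ?thesis using that by (auto simp: nF ip)
  qed
  then show ?thesis by (auto simp: nF ip)
qed

lemma PG_dir:
  fixes w1 w2 :: "'a::euclidean_space"
  assumes "norm w1 = 1" "norm w2 = 1"
  shows "PG w1 t = PG w2 t"
proof -
  have Tsurj: "surj (Tc :: 'a \<Rightarrow> _)" by (metis Tc_Ti surjI)
  have nT: "norm (Tc x) = norm x" for x :: 'a by (simp add: norm_eq_sqrt_inner Tc_inner)
  have cap: "PG w t = measure lebesgue (cball 0 1 \<inter> {y. t < y \<bullet> Tc w})" for w :: 'a
  proof -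
    have "cball 0 1 \<inter> {x. t < x \<bullet> w} \<in> sets borel" by measurable
    then show ?thesis unfolding PG_def
      using Tc_measure cap_image[OF Tc_inner Tsurj, of t w] by metis
  qed
  obtain f where f: "orthogonal_transformation f" "f (Tc w1) = Tc w2"
    using orthogonal_transformation_exists[of "Tc w1" "Tc w2"] assms nT by metis
  have fi: "f x \<bullet> f y = x \<bullet> y" for x y using f(1) by (simp add: orthogonal_transformation_def)
  have fs: "surj f" using f(1) by (rule orthogonal_transformation_surj)
  have "measure lebesgue (cball 0 1 \<inter> {y. t < y \<bullet> Tc w2}) = measure lebesgue (f ` (cball 0 1 \<inter> {y. t < y \<bullet> Tc w1}))"
    using cap_image[OF fi fs, of t "Tc w1"] f(2) by simp
  also have "\<dots> = measure lebesgue (cball 0 1 \<inter> {y. t < y \<bullet> Tc w1})"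
    by (rule measure_orthogonal_image[OF f(1)]) (rule lm_sub, auto)
  finally show ?thesis using cap by simp
qed

theorem lemma6:
  fixes mu w_pre :: "'a::euclidean_space" and b_pre :: real
  assumes "norm w_pre = 1"
    and "mu \<bullet> w_pre > 0"
    and "- (mu \<bullet> w_pre) - 1 < b_pre" and "b_pre < mu \<bullet> w_pre + 1"
  shows "let w_asym = (1 / norm (mu + w_pre)) *\<^sub>R (mu + w_pre) in
           mu \<bullet> w_asym \<ge> mu \<bullet> w_pre
         \<and> err_rate mu (lin_clf w_asym 0) \<le> err_rate mu (lin_clf w_pre b_pre)"
proof -
  define n where "n = norm (mu + w_pre)"
  define wa where "wa = (1 / n) *\<^sub>R (mu + w_pre)"
  define s where "s = mu \<bullet> w_pre"
  define m2 where "m2 = mu \<bullet> mu"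
  have ww: "w_pre \<bullet> w_pre = 1" using assms(1) by (simp add: norm_eq_sqrt_inner)
  have s0: "s > 0" using assms(2) s_def by simp
  have nsq: "n^2 = m2 + 2 * s + 1"
    unfolding n_def m2_def s_def power2_norm_eq_inner
    by (simp add: inner_add_left inner_add_right ww inner_commute)
  have m2s: "m2 \<ge> 0" unfolding m2_def by simp
  have n0: "n > 0"
  proof -
    have "n^2 > 0" using nsq s0 m2s by linarith
    moreover have "n \<ge> 0" unfolding n_def by simp
    ultimately show ?thesis by (cases "n = 0") auto
  qed
  have wa1: "norm wa = 1" unfolding wa_def n_def using n0 n_def by simp
  have cs: "s^2 \<le> m2" unfolding s_def m2_def using Cauchy_Schwarz_ineq[of mu w_pre] ww by simp
  have muwa: "mu \<bullet> wa = (m2 + s) / n" unfolding wa_def m2_def s_def by (simp add: inner_add_right)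
  have key: "s * n \<le> m2 + s"
  proof -
    have "(s*n)^2 \<le> (m2+s)^2"
    proof -
      have "(s*n)^2 = s^2 * (m2 + 2 * s + 1)" by (simp only: power_mult_distrib nsq)
      also have "\<dots> \<le> (m2+s)^2"
      proof -
        have a1: "s^2 * m2 \<le> m2 * m2" using cs m2s by (rule mult_right_mono)
        have a2: "s * s^2 \<le> s * m2" by (rule mult_left_mono[OF cs]) (use s0 in simp)
        have e: "s^2 * (m2 + 2 * s + 1) = s^2 * m2 + 2 * (s * s^2) + s^2"
          by (simp add: algebra_simps)
        have f: "(m2+s)^2 = m2 * m2 + 2 * (s * m2) + s^2"
          by (simp add: power2_eq_square algebra_simps)
        show ?thesis unfolding e f using a1 a2 by linarith
      qed
      finally show ?thesis .
    qed
    then show ?thesis by (rule power2_le_imp_le) (use m2s s0 in simp)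
  qed
  have ineq: "mu \<bullet> w_pre \<le> mu \<bullet> wa" unfolding muwa using key n0 s_def by (simp add: field_simps)
  define V where "V = measure lebesgue (cball (0::'a) 1)"
  have V0: "V > 0" unfolding V_def by (rule V_pos)
  have e1: "err_rate mu (lin_clf wa 0) = PG w_pre (mu \<bullet> wa) / V"
    using err_formula[OF wa1, of mu 0] PG_dir[OF wa1 assms(1)] unfolding V_def by simp
  have e2: "err_rate mu (lin_clf w_pre b_pre) = (PG w_pre (s - b_pre) + PG w_pre (s + b_pre)) / (2 * V)"
    using err_formula[OF assms(1), of mu b_pre] unfolding V_def s_def by simp
  have m: "PG w_pre (mu \<bullet> wa) \<le> PG w_pre s" using ineq PG_mono s_def by metis
  have k: "2 * PG w_pre s \<le> PG w_pre (s - b_pre) + PG w_pre (s + b_pre)"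
  proof (cases "b_pre \<ge> 0")
    case True then show ?thesis using PG_key[OF assms(1), of s b_pre] s0 by simp
  next
    case False then show ?thesis using PG_key[OF assms(1), of s "- b_pre"] s0 by simp
  qed
  have "err_rate mu (lin_clf wa 0) \<le> err_rate mu (lin_clf w_pre b_pre)"
    unfolding e1 e2 using m k V0 by (simp add: field_simps)
  then show ?thesis using ineq unfolding wa_def n_def Let_def by simp
qed

end
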